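(* There exists an absolute constant $c_1>0$ with the following property. Let $(m_n)$ and $(M_n)$ be sequences with $0<m_n\le M_n$ and $M_n/m_n=o(n)$ as $n\to\infty$. Then for all sufficiently large $n$, every $V\in\mathcal{L}_n(m_n,M_n)$ is invertible and \[ \bigl\|V^{-1}-S\bigr\|\le \frac{c_1 M_n^2}{m_n^3 (n-1)^2}, \] where $S=S(V)$ is the matrix associated with $V$ defined in the context.
   Context: For a matrix $A=(a_{i,j})$, $\|A\|:=\max_{i,j}|a_{i,j}|$. Class $\mathcal{L}_n(m,M)$: for $0<m\le M$, a $(2n-1)\times(2n-1)$ real symmetric matrix $V=(v_{i,j})$ belongs to $\mathcal{L}_n(m,M)$ if: (i) $v_{i,j}=0$ whenever $i\ne j$ and both $i,j\in\{1,\dots,n\}$, or both $i,j\in\{n+1,\dots,2n-1\}$; (ii) $v_{i,n+i}=v_{n+i,i}=0$ for $i=1,\dots,n-1$; (iii) $m\le v_{i,j}=v_{j,i}\le M$ for $i\in\{1,\dots,n\}$, $j\in\{n+1,\dots,2n-1\}$, $j\neq n+i$; (iv) $m\le v_{i,i}-\sum_{j=n+1}^{2n-1}v_{i,j}\le M$ for $i=1,\dots,n-1$, and $v_{n,n}=\sum_{j=n+1}^{2n-1}v_{n,j}$; (v) $v_{i,i}=\sum_{k=1}^n v_{k,i}$ for $i=n+1,\dots,2n-1$. Associated quantities: $v_{2n,i}=v_{i,2n}:=v_{i,i}-\sum_{j=1,j\ne i}^{2n-1}v_{i,j}$ for $i=1,\dots,2n-1$, and $v_{2n,2n}:=\sum_{i=1}^{2n-1}v_{2n,i}$.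 The $(2n-1)\times(2n-1)$ matrix $S=(s_{i,j})$ is defined by $s_{i,j}=\delta_{i,j}/v_{i,i}+1/v_{2n,2n}$ if $i,j\in\{1,\dots,n\}$ or $i,j\in\{n+1,\dots,2n-1\}$, and $s_{i,j}=-1/v_{2n,2n}$ if one of $i,j$ lies in $\{1,\dots,n\}$ and the other in $\{n+1,\dots,2n-1\}$; here $\delta_{i,j}$ is the Kronecker delta. *)

theory Defs
  imports "Jordan_Normal_Form.Matrix" "HOL-Library.Landau_Symbols"
begin

text \<open>1-based access to the entries of a matrix (the paper indexes from 1).\<close>
definition ent :: "real mat \<Rightarrow> nat \<Rightarrow> nat \<Rightarrow> real" where
  "ent V i j = V $$ (i - 1, j - 1)"

definition maxnorm :: "real mat \<Rightarrow> real" where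
  "maxnorm A = Max {\<bar>A $$ (i, j)\<bar> | i j. i < dim_row A \<and> j < dim_col A}"

definition in_L :: "nat \<Rightarrow> real \<Rightarrow> real \<Rightarrow> real mat \<Rightarrow> bool" where
  "in_L n m M V \<longleftrightarrow>
     0 < m \<and> m \<le> M \<and>
     V \<in> carrier_mat (2*n - 1) (2*n - 1) \<and> transpose_mat V = V \<and>
     (\<forall>i\<in>{1..n}. \<forall>j\<in>{1..n}. i \<noteq> j \<longrightarrow> ent V i j = 0) \<and>
     (\<forall>i\<in>{n+1..2*n-1}. \<forall>j\<in>{n+1..2*n-1}. i \<noteq> j \<longrightarrow> ent V i j = 0) \<and>
     (\<forall>i\<in>{1..n-1}. ent V i (n+i) = 0 \<and> ent V (n+i) i = 0) \<and>
     (\<forall>i\<in>{1..n}. \<forall>j\<in>{n+1..2*n-1}. j \<noteq> n + i \<longrightarrow>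
         m \<le> ent V i j \<and> ent V i j = ent V j i \<and> ent V i j \<le> M) \<and>
     (\<forall>i\<in>{1..n-1}. m \<le> ent V i i - (\<Sum>j=n+1..2*n-1. ent V i j) \<and>
                     ent V i i - (\<Sum>j=n+1..2*n-1. ent V i j) \<le> M) \<and>
     ent V n n = (\<Sum>j=n+1..2*n-1. ent V n j) \<and>
     (\<forall>i\<in>{n+1..2*n-1}. ent V i i = (\<Sum>k=1..n. ent V k i))"

text \<open>v_{2n,i} for i = 1..2n-1, and v_{2n,2n}.\<close>
definition vlast :: "nat \<Rightarrow> real mat \<Rightarrow> nat \<Rightarrow> real" where
  "vlast n V i = ent V i i - (\<Sum>j\<in>{1..2*n-1} - {i}. ent V i j)"

definition vcorner :: "nat \<Rightarrow> real mat \<Rightarrow> real" where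
  "vcorner n V = (\<Sum>i=1..2*n-1. vlast n V i)"

text \<open>The matrix S (1-based entries s_{i,j}), and as a matrix (0-based storage).\<close>
definition s_ent :: "nat \<Rightarrow> real mat \<Rightarrow> nat \<Rightarrow> nat \<Rightarrow> real" where
  "s_ent n V i j =
     (if (i \<le> n \<and> j \<le> n) \<or> (n < i \<and> n < j)
      then (if i = j then 1 / ent V i i else 0) + 1 / vcorner n V
      else - 1 / vcorner n V)"

definition S_mat :: "nat \<Rightarrow> real mat \<Rightarrow> real mat" where
  "S_mat n V = mat (2*n - 1) (2*n - 1) (\<lambda>(i, j). s_ent n V (i + 1) (j + 1))"

end

theory Submission
  imports Defs "Jordan_Normal_Form.Determinant"
begin


lemma core:
  fixes A B :: "nat set" and c :: "nat \<Rightarrow> nat \<Rightarrow> real" and dl f h d :: "nat \<Rightarrow> real"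
  assumes fin: "finite A" "finite B" and ne: "A \<noteq> {}"
  and dA: "\<And>i. i\<in>A \<Longrightarrow> d i = (\<Sum>l\<in>B. c i l) + dl i"
  and dB: "\<And>l. l\<in>B \<Longrightarrow> d l = (\<Sum>i\<in>A. c i l)"
  and cpos: "\<And>i l. i\<in>A \<Longrightarrow> l\<in>B \<Longrightarrow> 0 \<le> c i l"
  and dlpos: "\<And>i. i\<in>A \<Longrightarrow> 0 \<le> dl i"
  and dpos: "\<And>k. k\<in>A \<union> B \<Longrightarrow> 0 < d k"
  and eqA: "\<And>i. i\<in>A \<Longrightarrow> d i * f i - (\<Sum>l\<in>B. c i l * f l) = h i"
  and eqB: "\<And>l. l\<in>B \<Longrightarrow> d l * f l - (\<Sum>i\<in>A. c i l * f i) = h l"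
  and hb: "\<And>k. k\<in>A \<union> B \<Longrightarrow> \<bar>h k\<bar> \<le> H * d k"
  and sdl: "0 < (\<Sum>i\<in>A. dl i)"
  and tb: "\<bar>\<Sum>i\<in>A. dl i * f i\<bar> \<le> T * (\<Sum>i\<in>A. dl i)"
  and ov: "\<And>i i'. i\<in>A \<Longrightarrow> i'\<in>A \<Longrightarrow> i \<noteq> i' \<Longrightarrow> \<kappa> \<le> (\<Sum>l\<in>B. min (c i l / d i) (c i' l / d i'))"
  and kp: "0 < \<kappa>" and H: "0 \<le> H" and T: "0 \<le> T"
  and k: "k \<in> A \<union> B"
  shows "\<bar>f k\<bar> \<le> T + H + (4*H + 2*T)/\<kappa>"
proof -
  define a1 where "a1 = Max (f ` A)"
  define a0 where "a0 = Min (f ` A)"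
  define S where "S = (\<Sum>i\<in>A. dl i)"
  have a1: "\<And>i. i\<in>A \<Longrightarrow> f i \<le> a1" unfolding a1_def using fin by auto
  have a0: "\<And>i. i\<in>A \<Longrightarrow> a0 \<le> f i" unfolding a0_def using fin by auto
  obtain i1 where i1: "i1 \<in> A" "f i1 = a1" unfolding a1_def using fin ne
    by (metis (mono_tags, lifting) Max_in finite_imageI image_iff image_is_empty)
  obtain i0 where i0: "i0 \<in> A" "f i0 = a0" unfolding a0_def using fin ne
    by (metis (mono_tags, lifting) Min_in finite_imageI image_iff image_is_empty)
  have "a0 * S \<le> (\<Sum>i\<in>A. dl i * f i)" unfolding S_def sum_distrib_left
    by (rule sum_mono) (metis a0 dlpos mult.commute mult_left_mono)
  also have "\<dots> \<le> T * S" using abs_le_D1[OF tb] S_def by simp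
  finally have a0T: "a0 \<le> T" using sdl S_def by (simp add: mult_le_cancel_right_pos)
  have "- T * S \<le> (\<Sum>i\<in>A. dl i * f i)" using abs_le_D2[OF tb] S_def by simp
  also have "\<dots> \<le> a1 * S" unfolding S_def sum_distrib_left
    by (rule sum_mono) (metis a1 dlpos mult.commute mult_left_mono)
  finally have "(- T) * S \<le> a1 * S" .
  from mult_right_le_imp_le[OF this] have a1T: "- T \<le> a1" using sdl S_def by simp
  have Bup: "f l \<le> a1 + H" if l: "l \<in> B" for l
  proof -
    have "d l * f l = (\<Sum>i\<in>A. c i l * f i) + h l" using eqB[OF l] by simp
    also have "\<dots> \<le> (\<Sum>i\<in>A. c i l * a1) + H * d l"
      using hb[of l] l by (intro add_mono sum_mono mult_left_mono a1 cpos) auto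
    also have "\<dots> = (a1 + H) * d l"
    proof -
      have "(\<Sum>i\<in>A. c i l * a1) = d l * a1" using dB[OF l] by (simp add: sum_distrib_right)
      thus ?thesis by (simp add: algebra_simps)
    qed
    finally show ?thesis using dpos[of l] l by (simp add: mult.commute mult_le_cancel_left_pos)
  qed
  have Blo: "a0 - H \<le> f l" if l: "l \<in> B" for l
  proof -
    have "(\<Sum>i\<in>A. c i l * a0) = d l * a0" using dB[OF l] by (simp add: sum_distrib_right)
    hence "(a0 - H) * d l = (\<Sum>i\<in>A. c i l * a0) - H * d l"
      by (simp add: algebra_simps)
    also have "\<dots> \<le> (\<Sum>i\<in>A. c i l * f i) + h l"
    proof -
      have "(\<Sum>i\<in>A. c i l * a0) \<le> (\<Sum>i\<in>A. c i l * f i)"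
        using l by (intro sum_mono mult_left_mono a0 cpos) auto
      moreover have "- H * d l \<le> h l" using hb[of l] l by (simp add: abs_le_iff)
      ultimately show ?thesis by simp
    qed
    also have "\<dots> = d l * f l" using eqB[OF l] by simp
    finally show ?thesis using dpos[of l] l by (simp add: mult.commute mult_le_cancel_left_pos)
  qed
  define U where "U = a1 + H + T"
  define L where "L = H + T - a0"
  have U0: "0 \<le> U" using a1T H unfolding U_def by linarith
  have L0: "0 \<le> L" using a0T H unfolding L_def by linarith
  have fU: "f l \<le> U" if "l \<in> B" for l using Bup[OF that] T unfolding U_def by linarith
  have fL: "- L \<le> f l" if "l \<in> B" for l using Blo[OF that] T unfolding L_def by linarith
  have frep: "f i = (\<Sum>l\<in>B. (c i l / d i) * f l) + h i / d i" if i: "i \<in> A" for i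
  proof -
    have dp: "d i > 0" using dpos i by auto
    have "d i * f i = (\<Sum>l\<in>B. c i l * f l) + h i" using eqA[OF i] by simp
    hence "f i = ((\<Sum>l\<in>B. c i l * f l) + h i) / d i" using dp by (simp add: field_simps)
    thus ?thesis by (simp add: add_divide_distrib sum_divide_distrib)
  qed
  have psum: "(\<Sum>l\<in>B. c i l / d i) \<le> 1" if i: "i \<in> A" for i
  proof -
    have dp: "d i > 0" using dpos i by auto
    have "(\<Sum>l\<in>B. c i l / d i) = (\<Sum>l\<in>B. c i l) / d i" by (simp add: sum_divide_distrib)
    also have "\<dots> \<le> 1" using dA[OF i] dlpos[OF i] dp by simp
    finally show ?thesis .
  qed
  have hd: "\<bar>h i / d i\<bar> \<le> H" if i: "i \<in> A" for i
  proof -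
    have dp: "d i > 0" using dpos i by auto
    have "\<bar>h i / d i\<bar> = \<bar>h i\<bar> / d i" using dp by simp
    also have "\<dots> \<le> H" using hb[of i] i dp by (simp add: divide_le_eq)
    finally show ?thesis .
  qed
  have step: "f i - f i' \<le> (1 - \<kappa>) * (U + L) + 2 * H"
    if i: "i \<in> A" and i': "i' \<in> A" and ne: "i \<noteq> i'" for i i'
  proof -
    define p where "p l = c i l / d i" for l
    define p' where "p' l = c i' l / d i'" for l
    define q where "q l = min (p l) (p' l)" for l
    have Q: "\<kappa> \<le> (\<Sum>l\<in>B. q l)" using ov[OF i i' ne] unfolding q_def p_def p'_def .
    have P1: "(\<Sum>l\<in>B. p l) \<le> 1" using psum[OF i] unfolding p_def .
    have P1': "(\<Sum>l\<in>B. p' l) \<le> 1" using psum[OF i'] unfolding p'_def .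
    have s1: "(\<Sum>l\<in>B. (p l - q l) * f l) \<le> (\<Sum>l\<in>B. (p l - q l) * U)"
      by (rule sum_mono) (intro mult_left_mono fU, auto simp: q_def)
    also have "\<dots> = ((\<Sum>l\<in>B. p l) - (\<Sum>l\<in>B. q l)) * U"
      by (simp only: sum_subtractf[symmetric] sum_distrib_right)
    also have "\<dots> \<le> (1 - \<kappa>) * U" using P1 Q U0 by (intro mult_right_mono) auto
    finally have s1: "(\<Sum>l\<in>B. (p l - q l) * f l) \<le> (1 - \<kappa>) * U" .
    have "(\<Sum>l\<in>B. (p' l - q l) * (- L)) \<le> (\<Sum>l\<in>B. (p' l - q l) * f l)"
      by (rule sum_mono) (intro mult_left_mono fL, auto simp: q_def)
    moreover have "(\<Sum>l\<in>B. (p' l - q l) * (- L)) = - (((\<Sum>l\<in>B. p' l) - (\<Sum>l\<in>B. q l)) * L)"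
      by (simp only: sum_subtractf[symmetric] sum_distrib_right sum_negf[symmetric] mult_minus_right)
    moreover have "((\<Sum>l\<in>B. p' l) - (\<Sum>l\<in>B. q l)) * L \<le> (1 - \<kappa>) * L"
      using P1' Q L0 by (intro mult_right_mono) auto
    ultimately have s2: "- ((1 - \<kappa>) * L) \<le> (\<Sum>l\<in>B. (p' l - q l) * f l)" by linarith
    have eq: "(\<Sum>l\<in>B. p l * f l) - (\<Sum>l\<in>B. p' l * f l)
        = (\<Sum>l\<in>B. (p l - q l) * f l) - (\<Sum>l\<in>B. (p' l - q l) * f l)"
      by (simp add: sum_subtractf[symmetric] algebra_simps)
    have "f i - f i' = (\<Sum>l\<in>B. p l * f l) - (\<Sum>l\<in>B. p' l * f l) + (h i / d i - h i' / d i')"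
      using frep[OF i] frep[OF i'] unfolding p_def p'_def by simp
    also have "\<dots> \<le> (1 - \<kappa>) * U + (1 - \<kappa>) * L + 2 * H"
      using eq s1 s2 abs_le_D1[OF hd[OF i]] abs_le_D2[OF hd[OF i']] by linarith
    finally show ?thesis by (simp add: algebra_simps)
  qed
  have sig: "a1 - a0 \<le> (4*H + 2*T)/\<kappa>"
  proof (cases "i1 = i0")
    case True
    then have "a1 - a0 = 0" using i1 i0 by simp
    moreover have "0 \<le> (4*H + 2*T)/\<kappa>" using H T kp by simp
    ultimately show ?thesis by simp
  next
    case False
    have st: "a1 - a0 \<le> (1 - \<kappa>) * (a1 - a0 + 2*H + 2*T) + 2*H"
      using step[OF i1(1) i0(1) False] i1 i0 unfolding U_def L_def by (simp add: algebra_simps)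
    have "\<kappa> * (a1 - a0) \<le> (1 - \<kappa>) * (2*H + 2*T) + 2*H" using st by (simp add: algebra_simps)
    also have "\<dots> \<le> 4*H + 2*T" using kp H T by (simp add: algebra_simps)
    finally show ?thesis using kp by (simp add: pos_le_divide_eq mult.commute)
  qed
  have B0: "0 \<le> (4*H + 2*T)/\<kappa>" using H T kp by simp
  show ?thesis
  proof (cases "k \<in> A")
    case True
    show ?thesis using a1[OF True] a0[OF True] a0T a1T sig H unfolding abs_le_iff by linarith
  next
    case False
    hence kB: "k \<in> B" using k by auto
    show ?thesis using Bup[OF kB] Blo[OF kB] a0T a1T sig H unfolding abs_le_iff by linarith
  qed
qed



definition sg :: "nat \<Rightarrow> nat \<Rightarrow> real" where "sg n k = (if k \<le> n then 1 else -1)"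
definition dlt :: "nat \<Rightarrow> real mat \<Rightarrow> nat \<Rightarrow> real" where
  "dlt n V i = ent V i i - (\<Sum>j=n+1..2*n-1. ent V i j)"

definition GG :: "nat \<Rightarrow> real mat \<Rightarrow> nat \<Rightarrow> real" where
  "GG n V k = (if k \<le> n then dlt n V k else 0)"

lemma split_sum: "(n::nat) \<ge> 1 \<Longrightarrow> (\<Sum>t=1..2*n-1. g t) = (\<Sum>t=1..n. g t) + (\<Sum>t=n+1..2*n-1. g t)"
proof -
  assume n: "n \<ge> 1"
  have e: "2*n-1 = n + (n-1)" using n by simp
  show ?thesis unfolding e using sum.ub_add_nat[of 1 n g "n-1"] by simp
qed

context
  fixes n :: nat and m M :: real and V :: "real mat"
  assumes L: "in_L n m M V" and n5: "5 \<le> n"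
begin

lemma mpos: "0 < m" and mM: "m \<le> M" and carr: "V \<in> carrier_mat (2*n-1) (2*n-1)"
  using L unfolding in_L_def by auto

lemma symm: "i \<in> {1..2*n-1} \<Longrightarrow> j \<in> {1..2*n-1} \<Longrightarrow> ent V i j = ent V j i"
proof -
  assume i: "i \<in> {1..2*n-1}" and j: "j \<in> {1..2*n-1}"
  have T: "transpose_mat V = V" using L unfolding in_L_def by auto
  have "ent V i j = transpose_mat V $$ (i-1, j-1)" unfolding ent_def T ..
  also have "\<dots> = V $$ (j-1, i-1)" using i j carr by (subst index_transpose_mat) auto
  finally show ?thesis unfolding ent_def .
qed

lemma zAA: "i \<in> {1..n} \<Longrightarrow> j \<in> {1..n} \<Longrightarrow> i \<noteq> j \<Longrightarrow> ent V i j = 0"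
  using L unfolding in_L_def by auto
lemma zBB: "i \<in> {n+1..2*n-1} \<Longrightarrow> j \<in> {n+1..2*n-1} \<Longrightarrow> i \<noteq> j \<Longrightarrow> ent V i j = 0"
  using L unfolding in_L_def by auto
lemma zdiag: "i \<in> {1..n-1} \<Longrightarrow> ent V i (n+i) = 0"
  using L unfolding in_L_def by auto
lemma bAB: "i \<in> {1..n} \<Longrightarrow> j \<in> {n+1..2*n-1} \<Longrightarrow> j \<noteq> n + i \<Longrightarrow> m \<le> ent V i j \<and> ent V i j \<le> M"
  using L unfolding in_L_def by auto
lemma dltb: "i \<in> {1..n-1} \<Longrightarrow> m \<le> dlt n V i \<and> dlt n V i \<le> M"
  using L unfolding in_L_def dlt_def by auto
lemma dltn: "dlt n V n = 0"
  using L unfolding in_L_def dlt_def by auto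
lemma diagB: "i \<in> {n+1..2*n-1} \<Longrightarrow> ent V i i = (\<Sum>k=1..n. ent V k i)"
  using L unfolding in_L_def by auto

lemma dltA: "i \<in> {1..n} \<Longrightarrow> 0 \<le> dlt n V i \<and> dlt n V i \<le> M"
proof -
  assume i: "i \<in> {1..n}"
  show ?thesis
  proof (cases "i = n")
    case True thus ?thesis using dltn mpos mM by simp
  next
    case False
    hence "i \<in> {1..n-1}" using i by auto
    thus ?thesis using dltb[of i] mpos by auto
  qed
qed

lemma off: "k \<in> {1..2*n-1} \<Longrightarrow> t \<in> {1..2*n-1} \<Longrightarrow> k \<noteq> t \<Longrightarrow> 0 \<le> ent V k t \<and> ent V k t \<le> M"
proof -
  assume k: "k \<in> {1..2*n-1}" and t: "t \<in> {1..2*n-1}" and kt: "k \<noteq> t"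
  have AB: "0 \<le> ent V a b \<and> ent V a b \<le> M" if a: "a \<in> {1..n}" and b: "b \<in> {n+1..2*n-1}" for a b
  proof (cases "b = n + a")
    case True
    then have "a \<in> {1..n-1}" using a b by auto
    then show ?thesis using zdiag True mpos mM by auto
  next
    case False then show ?thesis using bAB[OF a b] mpos by auto
  qed
  consider "k \<le> n" "t \<le> n" | "k \<le> n" "t > n" | "k > n" "t \<le> n" | "k > n" "t > n" by linarith
  then show ?thesis
  proof cases
    case 1 then show ?thesis using zAA[of k t] k t kt mpos mM by auto
  next
    case 2 then show ?thesis using AB[of k t] k t by auto
  next
    case 3 then show ?thesis using AB[of t k] k t symm[of k t] by auto
  next
    case 4 then show ?thesis using zBB[of k t] k t kt mpos mM by auto
  qed
qed

lemma rowAA: "k \<in> {1..n} \<Longrightarrow> (\<Sum>t=1..n. ent V k t * g t) = ent V k k * g k"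
proof -
  assume k: "k \<in> {1..n}"
  have "(\<Sum>t=1..n. ent V k t * g t) = (\<Sum>t=1..n. if k = t then ent V k k * g k else 0)"
    using zAA[of k] k by (intro sum.cong) auto
  also have "\<dots> = ent V k k * g k" using k by simp
  finally show ?thesis .
qed

lemma rowBB: "k \<in> {n+1..2*n-1} \<Longrightarrow> (\<Sum>t=n+1..2*n-1. ent V k t * g t) = ent V k k * g k"
proof -
  assume k: "k \<in> {n+1..2*n-1}"
  have "(\<Sum>t=n+1..2*n-1. ent V k t * g t) = (\<Sum>t=n+1..2*n-1. if k = t then ent V k k * g k else 0)"
    using zBB[of k] k by (intro sum.cong) auto
  also have "\<dots> = ent V k k * g k" using k by simp
  finally show ?thesis .
qed

lemma rowBA: "k \<in> {n+1..2*n-1} \<Longrightarrow> (\<Sum>t=1..n. ent V k t) = ent V k k"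
proof -
  assume k: "k \<in> {n+1..2*n-1}"
  have "(\<Sum>t=1..n. ent V k t) = (\<Sum>t=1..n. ent V t k)"
    using k by (intro sum.cong refl symm) auto
  thus ?thesis using diagB[OF k] by simp
qed

lemma rowAB: "k \<in> {1..n} \<Longrightarrow> (\<Sum>t=n+1..2*n-1. ent V k t) = ent V k k - dlt n V k"
  unfolding dlt_def by simp

lemma diag_low: "k \<in> {1..2*n-1} \<Longrightarrow> (real n - 1) * m \<le> ent V k k"
proof -
  assume k: "k \<in> {1..2*n-1}"
  show ?thesis
  proof (cases "k \<le> n")
    case True
    hence kA: "k \<in> {1..n}" using k by auto
    show ?thesis
    proof (cases "k = n")
      case True
      have "real (card {n+1..2*n-1}) * m \<le> (\<Sum>t=n+1..2*n-1. ent V k t)"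
        using bAB[of k] kA True by (intro sum_bounded_below) auto
      moreover have "real (card {n+1..2*n-1}) = real n - 1" using n5 by simp
      ultimately show ?thesis using rowAB[OF kA] dltn True by simp
    next
      case False
      hence k1: "k \<in> {1..n-1}" using kA by auto
      have "real (card ({n+1..2*n-1} - {n+k})) * m \<le> (\<Sum>t\<in>{n+1..2*n-1} - {n+k}. ent V k t)"
        using bAB[of k] kA by (intro sum_bounded_below) auto
      also have "\<dots> \<le> (\<Sum>t=n+1..2*n-1. ent V k t)"
        using off[of k] k by (intro sum_mono2) auto
      finally have s: "real (card ({n+1..2*n-1} - {n+k})) * m \<le> (\<Sum>t=n+1..2*n-1. ent V k t)" .
      have "card ({n+1..2*n-1} - {n+k}) = n - 2" using k1 by (subst card_Diff_singleton) auto
      hence "real (card ({n+1..2*n-1} - {n+k})) = real n - 2" using n5 by simp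
      with s have "(real n - 2) * m \<le> ent V k k - dlt n V k" using rowAB[OF kA] by simp
      moreover have "m \<le> dlt n V k" using dltb[OF k1] by simp
      ultimately show ?thesis by (simp add: algebra_simps)
    qed
  next
    case False
    hence kB: "k \<in> {n+1..2*n-1}" using k by auto
    have "real (card ({1..n} - {k-n})) * m \<le> (\<Sum>t\<in>{1..n} - {k-n}. ent V t k)"
      using bAB kB by (intro sum_bounded_below) auto
    also have "\<dots> \<le> (\<Sum>t=1..n. ent V t k)"
      using off[of _ k] kB by (intro sum_mono2) auto
    also have "\<dots> = ent V k k" using diagB[OF kB] by simp
    finally have s: "real (card ({1..n} - {k-n})) * m \<le> ent V k k" .
    have "card ({1..n} - {k-n}) = n - 1" using kB by (subst card_Diff_singleton) auto
    hence "real (card ({1..n} - {k-n})) = real n - 1" using n5 by simp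
    with s show ?thesis by simp
  qed
qed

lemma diag_upA: "k \<in> {1..n} \<Longrightarrow> ent V k k \<le> real n * M"
proof -
  assume kA: "k \<in> {1..n}"
  have "(\<Sum>t=n+1..2*n-1. ent V k t) \<le> real (card {n+1..2*n-1}) * M"
    using off[of k] kA by (intro sum_bounded_above) auto
  moreover have "real (card {n+1..2*n-1}) = real n - 1" using n5 by simp
  ultimately show ?thesis using rowAB[OF kA] dltA[OF kA] by (simp add: algebra_simps)
qed

lemma rowAA1: "k \<in> {1..n} \<Longrightarrow> (\<Sum>t=1..n. ent V k t) = ent V k k"
  using rowAA[of k "\<lambda>_. 1"] by simp
lemma rowBB1: "k \<in> {n+1..2*n-1} \<Longrightarrow> (\<Sum>t=n+1..2*n-1. ent V k t) = ent V k k"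
  using rowBB[of k "\<lambda>_. 1"] by simp

lemma vlast_eq: "i \<in> {1..2*n-1} \<Longrightarrow> vlast n V i = (if i \<le> n then dlt n V i else 0)"
proof -
  assume i: "i \<in> {1..2*n-1}"
  have "vlast n V i = ent V i i - ((\<Sum>j=1..2*n-1. ent V i j) - ent V i i)"
    unfolding vlast_def using i by (subst sum_diff1) auto
  also have "\<dots> = ent V i i - ((\<Sum>j=1..n. ent V i j) + (\<Sum>j=n+1..2*n-1. ent V i j) - ent V i i)"
    using split_sum[of n "\<lambda>j. ent V i j"] n5 by simp
  finally have v: "vlast n V i = ent V i i - ((\<Sum>j=1..n. ent V i j) + (\<Sum>j=n+1..2*n-1. ent V i j) - ent V i i)" .
  show ?thesis
  proof (cases "i \<le> n")
    case True
    hence iA: "i \<in> {1..n}" using i by auto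
    show ?thesis using v rowAA1[OF iA] rowAB[OF iA] True by simp
  next
    case False
    hence iB: "i \<in> {n+1..2*n-1}" using i by auto
    show ?thesis using v rowBA[OF iB] rowBB1[OF iB] False by simp
  qed
qed

lemma vcorner_eq: "vcorner n V = (\<Sum>i=1..n. dlt n V i)"
proof -
  have "vcorner n V = (\<Sum>i=1..2*n-1. if i \<le> n then dlt n V i else 0)"
    unfolding vcorner_def by (intro sum.cong refl vlast_eq)
  also have "\<dots> = (\<Sum>i=1..n. if i \<le> n then dlt n V i else 0) + (\<Sum>i=n+1..2*n-1. if i \<le> n then dlt n V i else 0)"
    by (rule split_sum) (use n5 in simp)
  also have "\<dots> = (\<Sum>i=1..n. dlt n V i)" by simp
  finally show ?thesis .
qed

lemma Delta_low: "(real n - 1) * m \<le> vcorner n V"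
proof -
  have nn: "n = Suc (n - 1)" using n5 by simp
  have "(\<Sum>i=1..n. dlt n V i) = (\<Sum>i=1..n-1. dlt n V i) + dlt n V n"
    by (subst nn, subst sum.cl_ivl_Suc) (use n5 in simp)
  moreover have "real (card {1..n-1}) * m \<le> (\<Sum>i=1..n-1. dlt n V i)"
    using dltb by (intro sum_bounded_below) auto
  moreover have "real (card {1..n-1}) = real n - 1" using n5 by simp
  ultimately show ?thesis using vcorner_eq dltn by simp
qed

lemma gsum: "k \<in> {1..2*n-1} \<Longrightarrow> (\<Sum>t=1..2*n-1. sg n t * ent V k t) = (if k \<le> n then dlt n V k else 0)"
proof -
  assume k: "k \<in> {1..2*n-1}"
  have "(\<Sum>t=1..2*n-1. sg n t * ent V k t) = (\<Sum>t=1..n. sg n t * ent V k t) + (\<Sum>t=n+1..2*n-1. sg n t * ent V k t)"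
    by (rule split_sum) (use n5 in simp)
  also have "\<dots> = (\<Sum>t=1..n. ent V k t) - (\<Sum>t=n+1..2*n-1. ent V k t)"
    by (simp add: sg_def sum_negf)
  finally have e: "(\<Sum>t=1..2*n-1. sg n t * ent V k t) = (\<Sum>t=1..n. ent V k t) - (\<Sum>t=n+1..2*n-1. ent V k t)" .
  show ?thesis
  proof (cases "k \<le> n")
    case True
    hence kA: "k \<in> {1..n}" using k by auto
    show ?thesis using e rowAA1[OF kA] rowAB[OF kA] True by simp
  next
    case False
    hence kB: "k \<in> {n+1..2*n-1}" using k by auto
    show ?thesis using e rowBA[OF kB] rowBB1[OF kB] False by simp
  qed
qed

lemma ABun: "{1..n} \<union> {n+1..2*n-1} = {1..2*n-1}" using n5 by auto

lemma Mpos: "0 < M" using mpos mM by simp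

lemma overlap:
  assumes i: "i \<in> {1..n}" and i': "i' \<in> {1..n}"
  shows "m / (3*M) \<le> (\<Sum>l=n+1..2*n-1. min (ent V i l / ent V i i) (ent V i' l / ent V i' i'))"
proof -
  let ?B = "{n+1..2*n-1}"
  let ?X = "?B - {n+i, n+i'}"
  have dpos: "0 < ent V k k" if "k \<in> {1..n}" for k
  proof -
    have "0 < (real n - 1) * m" using n5 mpos by simp
    also have "\<dots> \<le> ent V k k" using diag_low[of k] that n5 by force
    finally show ?thesis .
  qed
  have lb: "m / (real n * M) \<le> ent V a l / ent V a a" if a: "a \<in> {1..n}" and l: "l \<in> ?X" "l \<noteq> n + a" for a l
  proof -
    have "m \<le> ent V a l" using bAB[OF a] l by auto
    moreover have "ent V a a \<le> real n * M" using diag_upA[OF a] .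
    moreover have "0 < ent V a a" using dpos[OF a] .
    ultimately show ?thesis using mpos by (intro frac_le) auto
  qed
  have "real (card ?X) * (m / (real n * M)) \<le> (\<Sum>l\<in>?X. min (ent V i l / ent V i i) (ent V i' l / ent V i' i'))"
    using lb[OF i] lb[OF i'] by (intro sum_bounded_below) auto
  also have "\<dots> \<le> (\<Sum>l=n+1..2*n-1. min (ent V i l / ent V i i) (ent V i' l / ent V i' i'))"
  proof (rule sum_mono2)
    show "0 \<le> min (ent V i l / ent V i i) (ent V i' l / ent V i' i')" if "l \<in> ?B - ?X" for l
      using off[of i l] off[of i' l] that i i' dpos[OF i] dpos[OF i'] by auto
  qed auto
  finally have s: "real (card ?X) * (m / (real n * M)) \<le> (\<Sum>l=n+1..2*n-1. min (ent V i l / ent V i i) (ent V i' l / ent V i' i'))" .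
  have "card ?B - card {n+i, n+i'} \<le> card ?X" by (rule diff_card_le_card_Diff) auto
  moreover have "card {n+i, n+i'} \<le> 2" by (simp add: card_insert_if)
  moreover have "card ?B = n - 1" by simp
  ultimately have "n - 3 \<le> card ?X" by linarith
  hence c: "real n - 3 \<le> real (card ?X)" using n5 by linarith
  have q0: "0 \<le> m / (real n * M)" using mpos Mpos by simp
  have "m / (3*M) = (m / (real n * M)) * (real n / 3)" using n5 Mpos by (simp add: field_simps)
  also have "\<dots> \<le> (m / (real n * M)) * real (card ?X)"
    using c n5 by (intro mult_left_mono q0) auto
  finally show ?thesis using s by (simp add: mult.commute)
qed

lemma main_bound:
  fixes x y :: "nat \<Rightarrow> real" and H T :: real
  assumes eq: "\<And>k. k\<in>{1..2*n-1} \<Longrightarrow> (\<Sum>t=1..2*n-1. ent V k t * x t) = y k"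
  and hb: "\<And>k. k\<in>{1..2*n-1} \<Longrightarrow> \<bar>y k\<bar> \<le> H * ent V k k"
  and tb: "\<bar>\<Sum>k=1..2*n-1. sg n k * y k\<bar> \<le> T * vcorner n V"
  and H: "0 \<le> H" and T: "0 \<le> T"
  and k: "k \<in> {1..2*n-1}"
  shows "\<bar>x k\<bar> \<le> T + H + (4*H+2*T) / (m/(3*M))"
proof -
  let ?A = "{1..n}" and ?B = "{n+1..2*n-1}"
  have sgA: "sg n i = 1" if "i \<in> ?A" for i using that by (simp add: sg_def)
  have sgB: "sg n i = -1" if "i \<in> ?B" for i using that by (simp add: sg_def)
  have abs_sg: "\<bar>sg n i * z\<bar> = \<bar>z\<bar>" for i z by (simp add: sg_def abs_mult)
  have dpos: "0 < ent V k k" if "k \<in> ?A \<union> ?B" for k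
  proof -
    have "0 < (real n - 1) * m" using n5 mpos by simp
    also have "\<dots> \<le> ent V k k" using diag_low[of k] that ABun by auto
    finally show ?thesis .
  qed
  have eqsplit: "(\<Sum>t=1..n. ent V k t * x t) + (\<Sum>t=n+1..2*n-1. ent V k t * x t) = y k"
    if "k \<in> {1..2*n-1}" for k
    using eq[OF that] split_sum[of n "\<lambda>t. ent V k t * x t"] n5 by simp
  have id: "(\<Sum>i=1..n. dlt n V i * x i) = (\<Sum>k=1..2*n-1. sg n k * y k)"
  proof -
    have "(\<Sum>k=1..2*n-1. sg n k * y k) = (\<Sum>k=1..2*n-1. \<Sum>t=1..2*n-1. sg n k * ent V k t * x t)"
    proof (rule sum.cong[OF refl])
      fix k assume k: "k \<in> {1..2*n-1}"
      have "sg n k * y k = sg n k * (\<Sum>t=1..2*n-1. ent V k t * x t)" using eq[OF k] by simp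
      thus "sg n k * y k = (\<Sum>t=1..2*n-1. sg n k * ent V k t * x t)"
        by (simp add: sum_distrib_left mult.assoc)
    qed
    also have "\<dots> = (\<Sum>t=1..2*n-1. \<Sum>k=1..2*n-1. sg n k * ent V k t * x t)"
      by (rule sum.swap)
    also have "\<dots> = (\<Sum>t=1..2*n-1. (\<Sum>k=1..2*n-1. sg n k * ent V t k) * x t)"
    proof (rule sum.cong[OF refl])
      fix t assume t: "t \<in> {1..2*n-1}"
      have "(\<Sum>k=1..2*n-1. sg n k * ent V k t * x t) = (\<Sum>k=1..2*n-1. sg n k * ent V t k * x t)"
        using t symm by (intro sum.cong refl) auto
      thus "(\<Sum>k=1..2*n-1. sg n k * ent V k t * x t) = (\<Sum>k=1..2*n-1. sg n k * ent V t k) * x t"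
        by (simp add: sum_distrib_right)
    qed
    also have "\<dots> = (\<Sum>t=1..2*n-1. (if t \<le> n then dlt n V t else 0) * x t)"
      by (intro sum.cong refl, subst gsum) auto
    also have "\<dots> = (\<Sum>t=1..n. (if t \<le> n then dlt n V t else 0) * x t) + (\<Sum>t=n+1..2*n-1. (if t \<le> n then dlt n V t else 0) * x t)"
      by (rule split_sum) (use n5 in simp)
    also have "\<dots> = (\<Sum>i=1..n. dlt n V i * x i)" by simp
    finally show ?thesis by simp
  qed
  have "\<bar>sg n k * x k\<bar> \<le> T + H + (4*H+2*T) / (m/(3*M))"
  proof (rule core[where A="?A" and B="?B" and c="ent V" and dl="dlt n V" and d="\<lambda>k. ent V k k"
        and h="\<lambda>k. sg n k * y k" and \<kappa>="m/(3*M)"])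
    show "finite ?A" "finite ?B" "?A \<noteq> {}" using n5 by auto
    show "ent V i i = (\<Sum>l\<in>?B. ent V i l) + dlt n V i" if "i \<in> ?A" for i by (simp add: dlt_def)
    show "ent V l l = (\<Sum>i\<in>?A. ent V i l)" if "l \<in> ?B" for l using diagB that by simp
    show "0 \<le> ent V i l" if "i \<in> ?A" "l \<in> ?B" for i l using off[of i l] that by auto
    show "0 \<le> dlt n V i" if "i \<in> ?A" for i using dltA that by simp
    show "0 < ent V k k" if "k \<in> ?A \<union> ?B" for k using dpos that .
    show "ent V i i * (sg n i * x i) - (\<Sum>l\<in>?B. ent V i l * (sg n l * x l)) = sg n i * y i"
      if i: "i \<in> ?A" for i
    proof -
      have "(\<Sum>l\<in>?B. ent V i l * (sg n l * x l)) = - (\<Sum>l\<in>?B. ent V i l * x l)"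
        using sgB by (simp add: sum_negf[symmetric])
      moreover have "ent V i i * x i + (\<Sum>t=n+1..2*n-1. ent V i t * x t) = y i"
        using eqsplit[of i] rowAA[OF i, of x] i by auto
      ultimately show ?thesis using sgA[OF i] by simp
    qed
    show "ent V l l * (sg n l * x l) - (\<Sum>i\<in>?A. ent V i l * (sg n i * x i)) = sg n l * y l"
      if l: "l \<in> ?B" for l
    proof -
      have "(\<Sum>i\<in>?A. ent V i l * (sg n i * x i)) = (\<Sum>i\<in>?A. ent V l i * x i)"
        using sgA l symm by (intro sum.cong refl) auto
      moreover have "(\<Sum>t=1..n. ent V l t * x t) + ent V l l * x l = y l"
        using eqsplit[of l] rowBB[OF l, of x] l by auto
      ultimately show ?thesis using sgB[OF l] by simp
    qed
    show "\<bar>sg n k * y k\<bar> \<le> H * ent V k k" if "k \<in> ?A \<union> ?B" for k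
      using hb[of k] that ABun abs_sg by auto
    show "0 < (\<Sum>i\<in>?A. dlt n V i)"
    proof -
      have "0 < (real n - 1) * m" using n5 mpos by simp
      thus ?thesis using Delta_low vcorner_eq by simp
    qed
    show "\<bar>\<Sum>i\<in>?A. dlt n V i * (sg n i * x i)\<bar> \<le> T * (\<Sum>i\<in>?A. dlt n V i)"
    proof -
      have "(\<Sum>i\<in>?A. dlt n V i * (sg n i * x i)) = (\<Sum>i=1..n. dlt n V i * x i)"
        using sgA by (intro sum.cong refl) auto
      thus ?thesis using id tb vcorner_eq by simp
    qed
    show "m / (3*M) \<le> (\<Sum>l\<in>?B. min (ent V i l / ent V i i) (ent V i' l / ent V i' i'))"
      if "i \<in> ?A" "i' \<in> ?A" "i \<noteq> i'" for i i' using overlap that by simp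
    show "0 < m / (3*M)" using mpos Mpos by simp
    show "0 \<le> H" "0 \<le> T" using H T by auto
    show "k \<in> ?A \<union> ?B" using k ABun by simp
  qed
  thus ?thesis using abs_sg by simp
qed

lemma GG_b: "k \<in> {1..2*n-1} \<Longrightarrow> 0 \<le> GG n V k \<and> GG n V k \<le> M"
  using dltA[of k] mpos mM unfolding GG_def by auto

lemma S_ent: "t \<in> {1..2*n-1} \<Longrightarrow> j \<in> {1..2*n-1} \<Longrightarrow>
   s_ent n V t j = (if t = j then 1 / ent V j j else 0) + sg n t * sg n j / vcorner n V"
  by (auto simp: s_ent_def sg_def)

lemma VS_row: "k \<in> {1..2*n-1} \<Longrightarrow> j \<in> {1..2*n-1} \<Longrightarrow>
   (\<Sum>t=1..2*n-1. ent V k t * s_ent n V t j) = ent V k j / ent V j j + sg n j / vcorner n V * GG n V k"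
proof -
  assume k: "k \<in> {1..2*n-1}" and j: "j \<in> {1..2*n-1}"
  have "(\<Sum>t=1..2*n-1. ent V k t * s_ent n V t j)
      = (\<Sum>t=1..2*n-1. (if j = t then ent V k j / ent V j j else 0) + sg n j / vcorner n V * (sg n t * ent V k t))"
    using j by (intro sum.cong refl) (auto simp: S_ent algebra_simps)
  also have "\<dots> = ent V k j / ent V j j + sg n j / vcorner n V * (\<Sum>t=1..2*n-1. sg n t * ent V k t)"
    using j by (simp add: sum.distrib sum_distrib_left)
  also have "\<dots> = ent V k j / ent V j j + sg n j / vcorner n V * GG n V k"
    using gsum[OF k] unfolding GG_def by simp
  finally show ?thesis .
qed

lemma vcorner_pos: "0 < vcorner n V"
proof -
  have "0 < (real n - 1) * m" using n5 mpos by simp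
  thus ?thesis using Delta_low by simp
qed

lemma sum_sgGG: "(\<Sum>k=1..2*n-1. sg n k * GG n V k) = vcorner n V"
proof -
  have "(\<Sum>k=1..2*n-1. sg n k * GG n V k) = (\<Sum>k=1..n. sg n k * GG n V k) + (\<Sum>k=n+1..2*n-1. sg n k * GG n V k)"
    by (rule split_sum) (use n5 in simp)
  also have "\<dots> = (\<Sum>k=1..n. dlt n V k)" by (simp add: GG_def sg_def)
  finally show ?thesis using vcorner_eq by simp
qed

lemma sum_conv: "(\<Sum>t=1..N. f t) = (\<Sum>i\<in>{0..<N}. f (Suc i))"
  by (induct N) (auto simp: sum.cl_ivl_Suc)

lemma col_bound:
  fixes W :: "real mat"
  assumes VW: "\<And>k. k \<in> {1..2*n-1} \<Longrightarrow> (\<Sum>t=1..2*n-1. ent V k t * ent W t j) = (if k = j then 1 else 0)"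
  and j: "j \<in> {1..2*n-1}" and k: "k \<in> {1..2*n-1}"
  shows "\<bar>ent W k j - s_ent n V k j\<bar> \<le> 33 * M^2 / (m^3 * (real n - 1)^2)"
proof -
  define r where "r = real n - 1"
  have r4: "4 \<le> r" using n5 unfolding r_def by simp
  define E where "E = M / (r^2 * m^2)"
  define x where "x t = ent W t j - s_ent n V t j" for t
  define y where "y k = (if k = j then 1 else 0) - (ent V k j / ent V j j + sg n j / vcorner n V * GG n V k)" for k
  have E0: "0 \<le> E" unfolding E_def using Mpos by simp
  have djj: "r * m \<le> ent V j j" using diag_low[OF j] unfolding r_def .
  have rm: "0 < r * m" using r4 mpos by simp
  have D: "r * m \<le> vcorner n V" using Delta_low unfolding r_def .
  have eq: "(\<Sum>t=1..2*n-1. ent V k t * x t) = y k" if kk: "k \<in> {1..2*n-1}" for k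
    unfolding x_def y_def using VW[OF kk] VS_row[OF kk j]
    by (simp add: right_diff_distrib sum_subtractf)
  have b1: "\<bar>(if k = j then 1 else 0) - ent V k j / ent V j j\<bar> \<le> M / (r * m)" if kk: "k \<in> {1..2*n-1}" for k
  proof (cases "k = j")
    case True then show ?thesis using djj rm Mpos by simp
  next
    case False
    have o: "0 \<le> ent V k j" "ent V k j \<le> M" using off[OF kk j False] by auto
    have "ent V k j / ent V j j \<le> M / (r * m)" using o djj rm by (intro frac_le) auto
    moreover have "0 \<le> ent V k j / ent V j j" using o djj rm by simp
    ultimately show ?thesis using False by simp
  qed
  have b2: "\<bar>sg n j / vcorner n V * GG n V k\<bar> \<le> M / (r * m)" if kk: "k \<in> {1..2*n-1}" for k
  proof -
    have "\<bar>sg n j / vcorner n V * GG n V k\<bar> = GG n V k / vcorner n V"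
      using GG_b[OF kk] vcorner_pos by (simp add: sg_def abs_mult)
    also have "\<dots> \<le> M / (r * m)" using GG_b[OF kk] D rm by (intro frac_le) auto
    finally show ?thesis .
  qed
  have hb: "\<bar>y k\<bar> \<le> (2 * E) * ent V k k" if kk: "k \<in> {1..2*n-1}" for k
  proof -
    have "\<bar>y k\<bar> \<le> M / (r * m) + M / (r * m)"
    proof -
      have "y k = ((if k = j then 1 else 0) - ent V k j / ent V j j) - sg n j / vcorner n V * GG n V k"
        unfolding y_def by simp
      hence "\<bar>y k\<bar> \<le> \<bar>(if k = j then 1 else 0) - ent V k j / ent V j j\<bar> + \<bar>sg n j / vcorner n V * GG n V k\<bar>"
        using abs_triangle_ineq4 by metis
      thus ?thesis using b1[OF kk] b2[OF kk] by linarith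
    qed
    also have "\<dots> = (2 * E) * (r * m)" unfolding E_def using rm by (simp add: field_simps power2_eq_square)
    also have "\<dots> \<le> (2 * E) * ent V k k" using diag_low[OF kk] E0 unfolding r_def
      by (intro mult_left_mono) auto
    finally show ?thesis .
  qed
  have tsum: "(\<Sum>k=1..2*n-1. sg n k * y k) = - (GG n V j / ent V j j)"
  proof -
    have s1: "(\<Sum>k=1..2*n-1. sg n k * (if k = j then 1 else 0)) = sg n j" using j by (simp add: if_distrib cong: if_cong)
    have s2: "(\<Sum>k=1..2*n-1. sg n k * ent V k j) = GG n V j"
    proof -
      have "(\<Sum>k=1..2*n-1. sg n k * ent V k j) = (\<Sum>k=1..2*n-1. sg n k * ent V j k)"
        using j symm by (intro sum.cong refl) auto
      thus ?thesis using gsum[OF j] unfolding GG_def by simp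
    qed
    have "(\<Sum>k=1..2*n-1. sg n k * y k) = (\<Sum>k=1..2*n-1. sg n k * (if k = j then 1 else 0))
        - (\<Sum>k=1..2*n-1. sg n k * ent V k j) / ent V j j - sg n j / vcorner n V * (\<Sum>k=1..2*n-1. sg n k * GG n V k)"
      unfolding y_def by (simp add: algebra_simps sum_subtractf sum.distrib sum_distrib_left sum_divide_distrib)
    also have "\<dots> = - (GG n V j / ent V j j)" using s1 s2 sum_sgGG vcorner_pos by simp
    finally show ?thesis .
  qed
  have tb: "\<bar>\<Sum>k=1..2*n-1. sg n k * y k\<bar> \<le> E * vcorner n V"
  proof -
    have "\<bar>\<Sum>k=1..2*n-1. sg n k * y k\<bar> = GG n V j / ent V j j" using tsum GG_b[OF j] djj rm by simp
    also have "\<dots> \<le> M / (r * m)" using GG_b[OF j] djj rm by (intro frac_le) auto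
    also have "\<dots> = E * (r * m)" unfolding E_def using rm by (simp add: field_simps power2_eq_square)
    also have "\<dots> \<le> E * vcorner n V" using D E0 by (intro mult_left_mono) auto
    finally show ?thesis .
  qed
  have "\<bar>x k\<bar> \<le> E + 2 * E + (4 * (2 * E) + 2 * E) / (m / (3 * M))"
    using main_bound[OF eq hb tb _ E0 k] E0 by simp
  also have "\<dots> = 3 * E + 30 * E * (M / m)" using mpos Mpos by (simp add: field_simps)
  also have "\<dots> \<le> 3 * E * (M / m) + 30 * E * (M / m)"
  proof -
    have "1 \<le> M / m" using mM mpos by simp
    hence "3 * E * 1 \<le> 3 * E * (M / m)" using E0 by (intro mult_left_mono) auto
    thus ?thesis by simp
  qed
  also have "\<dots> = 33 * M^2 / (m^3 * (real n - 1)^2)"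
    unfolding E_def r_def using mpos by (simp add: field_simps power2_eq_square power3_eq_cube)
  finally show ?thesis unfolding x_def .
qed

lemma V_invertible: "invertible_mat V"
proof -
  have "det V \<noteq> 0"
  proof
    assume "det V = 0"
    then obtain v where v: "v \<in> carrier_vec (2*n-1)" "v \<noteq> 0\<^sub>v (2*n-1)" "V *\<^sub>v v = 0\<^sub>v (2*n-1)"
      using det_0_iff_vec_prod_zero[OF carr] by auto
    define x where "x t = v $ (t - 1)" for t
    have eq: "(\<Sum>t=1..2*n-1. ent V k t * x t) = 0" if k: "k\<in>{1..2*n-1}" for k
    proof -
      have "k - 1 < 2*n-1" using k by auto
      hence "(V *\<^sub>v v) $ (k-1) = 0" using v(3) by simp
      moreover have "(V *\<^sub>v v) $ (k-1) = (\<Sum>i\<in>{0..<2*n-1}. V $$ (k-1, i) * v $ i)"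
      proof -
        have dV: "dim_row V = 2*n-1" "dim_col V = 2*n-1" using carr by auto
        have dv: "dim_vec v = 2*n-1" using v(1) by auto
        have "(V *\<^sub>v v) $ (k-1) = row V (k-1) \<bullet> v" using k dV by (intro index_mult_mat_vec) auto
        also have "\<dots> = (\<Sum>i\<in>{0..<2*n-1}. V $$ (k-1, i) * v $ i)"
          unfolding scalar_prod_def using k dV dv by (intro sum.cong) auto
        finally show ?thesis .
      qed
      moreover have "(\<Sum>t=1..2*n-1. ent V k t * x t) = (\<Sum>i\<in>{0..<2*n-1}. V $$ (k-1,i) * v $ i)"
        unfolding ent_def x_def by (subst sum_conv) simp
      ultimately show ?thesis by simp
    qed
    have xb: "\<bar>x k\<bar> \<le> 0 + 0 + (4*0+2*0)/(m/(3*M))" if k: "k \<in> {1..2*n-1}" for k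
      by (rule main_bound[where y="\<lambda>_. 0"]) (use eq k vcorner_pos in auto)
    have "v = 0\<^sub>v (2*n-1)"
    proof (rule eq_vecI)
      show "dim_vec v = dim_vec (0\<^sub>v (2*n-1))" using v(1) by simp
      fix i assume "i < dim_vec (0\<^sub>v (2*n-1) :: real vec)"
      hence i: "i < 2*n-1" by simp
      have "\<bar>x (i+1)\<bar> \<le> 0" using xb[of "i+1"] i by simp
      thus "v $ i = 0\<^sub>v (2*n-1) $ i" using i unfolding x_def by simp
    qed
    with v(2) show False by simp
  qed
  from det_non_zero_imp_unit[OF carr this, of "()"]
  obtain B where B: "B \<in> carrier_mat (2*n-1) (2*n-1)" "B * V = 1\<^sub>m (2*n-1)" "V * B = 1\<^sub>m (2*n-1)"
    unfolding Units_def ring_mat_def by auto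
  show ?thesis unfolding invertible_mat_def inverts_mat_def square_mat.simps
    using B carr by auto
qed

lemma inv_bound:
  assumes W1: "inverts_mat V W" and W2: "inverts_mat W V"
  shows "maxnorm (W - S_mat n V) \<le> 33 * M^2 / (m^3 * (real n - 1)^2)"
proof -
  let ?N = "2*n-1"
  have VW: "V * W = 1\<^sub>m ?N" using W1 carr unfolding inverts_mat_def by auto
  have WV: "W * V = 1\<^sub>m (dim_row W)" using W2 unfolding inverts_mat_def by auto
  have dcW: "dim_col W = ?N" using arg_cong[OF VW, of dim_col] by simp
  have drW: "dim_row W = ?N" using arg_cong[OF WV, of dim_col] carr by simp
  have VWe: "(\<Sum>t=1..?N. ent V k t * ent W t j) = (if k = j then 1 else 0)"
    if k: "k \<in> {1..?N}" and j: "j \<in> {1..?N}" for k j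
  proof -
    have "(V * W) $$ (k-1, j-1) = (if k = j then 1 else 0)" using VW k j by auto
    moreover have "(V * W) $$ (k-1, j-1) = (\<Sum>i\<in>{0..<?N}. V $$ (k-1, i) * W $$ (i, j-1))"
    proof -
      have dV: "dim_row V = ?N" "dim_col V = ?N" using carr by auto
      have "(V * W) $$ (k-1, j-1) = row V (k-1) \<bullet> col W (j-1)"
        using k j dV dcW by (intro index_mult_mat) auto
      also have "\<dots> = (\<Sum>i\<in>{0..<?N}. V $$ (k-1, i) * W $$ (i, j-1))"
        unfolding scalar_prod_def using k j dV dcW drW by (intro sum.cong) auto
      finally show ?thesis .
    qed
    moreover have "(\<Sum>t=1..?N. ent V k t * ent W t j) = (\<Sum>i\<in>{0..<?N}. V $$ (k-1,i) * W $$ (i, j-1))"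
      unfolding ent_def by (subst sum_conv) simp
    ultimately show ?thesis by simp
  qed
  let ?X = "{\<bar>(W - S_mat n V) $$ (i, j)\<bar> | i j. i < dim_row (W - S_mat n V) \<and> j < dim_col (W - S_mat n V)}"
  have dS: "dim_row (W - S_mat n V) = ?N" "dim_col (W - S_mat n V) = ?N"
    unfolding S_mat_def by auto
  have fin: "finite ?X"
  proof -
    have "?X \<subseteq> (\<lambda>(i,j). \<bar>(W - S_mat n V) $$ (i, j)\<bar>) ` ({..<?N} \<times> {..<?N})"
      using dS by auto
    thus ?thesis by (rule finite_subset) auto
  qed
  have ne: "?X \<noteq> {}"
  proof -
    have "0 < 2*n-1" using n5 by simp
    hence "\<bar>(W - S_mat n V) $$ (0, 0)\<bar> \<in> ?X" unfolding dS by blast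
    thus ?thesis by blast
  qed
  show ?thesis unfolding maxnorm_def
  proof (rule Max.boundedI[OF fin ne])
    fix a assume "a \<in> ?X"
    then obtain i j where ij: "i < ?N" "j < ?N" and a: "a = \<bar>(W - S_mat n V) $$ (i, j)\<bar>"
      using dS by auto
    have "(W - S_mat n V) $$ (i, j) = ent W (i+1) (j+1) - s_ent n V (i+1) (j+1)"
      using ij unfolding S_mat_def ent_def by simp
    moreover have "\<bar>ent W (i+1) (j+1) - s_ent n V (i+1) (j+1)\<bar> \<le> 33 * M^2 / (m^3 * (real n - 1)^2)"
      by (rule col_bound) (use VWe ij in auto)
    ultimately show "a \<le> 33 * M^2 / (m^3 * (real n - 1)^2)" using a by simp
  qed
qed

end

theorem proposition1:
  shows "\<exists>c1::real. c1 > 0 \<and>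
    (\<forall>(m::nat \<Rightarrow> real) (M::nat \<Rightarrow> real).
       (\<forall>n. 0 < m n \<and> m n \<le> M n) \<and> (\<lambda>n. M n / m n) \<in> o(\<lambda>n. real n) \<longrightarrow>
       (\<forall>\<^sub>F n in sequentially. \<forall>V. in_L n (m n) (M n) V \<longrightarrow>
          invertible_mat V \<and>
          (\<forall>W. inverts_mat V W \<and> inverts_mat W V \<longrightarrow>
             maxnorm (W - S_mat n V) \<le> c1 * (M n)^2 / ((m n)^3 * (real n - 1)^2))))"
proof (intro exI[of _ 33] conjI allI impI)
  fix m M :: "nat \<Rightarrow> real"
  show "\<forall>\<^sub>F n in sequentially. \<forall>V. in_L n (m n) (M n) V \<longrightarrow>
          invertible_mat V \<and>
          (\<forall>W. inverts_mat V W \<and> inverts_mat W V \<longrightarrow>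
             maxnorm (W - S_mat n V) \<le> 33 * (M n)^2 / ((m n)^3 * (real n - 1)^2))"
    unfolding eventually_sequentially
    using V_invertible inv_bound by blast
qed simp

end
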